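(* Let $\mu=\mu_1\otimes\cdots\otimes\mu_n$ be a product probability measure on $\mathbb{R}^n$, where each $\mu_k$ is a probability measure on $\mathbb{R}$ with density $g_k\in L^\infty(\mathbb{R})$. Then for every convex set $A\subset\mathbb{R}^n$, $$\mu^+(\partial A)\leq 2\sum_{k=1}^n\|g_k\|_\infty,$$ and consequently $\Gamma(\mu)\leq 2\sum_{k=1}^n\|g_k\|_\infty$. Moreover, the constant $2$ is optimal (it cannot be replaced by any smaller constant valid for all such product measures).
   Context: $B_2^n$ is the Euclidean unit ball. $\mu^+(\partial A)=\liminf_{\epsilon\to0^+}\frac{\mu((A+\epsilon B_2^n)\setminus A)}{\epsilon}$ and $\Gamma(\mu)=\sup\{\mu^+(\partial A): A \text{ a convex body (compact convex set with nonempty interior)}\}$. *)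

theory Defs
  imports "HOL-Probability.Probability"
begin

definition Linf_norm :: "(real \<Rightarrow> real) \<Rightarrow> ereal" where
  "Linf_norm g = esssup lborel (\<lambda>x. ereal \<bar>g x\<bar>)"

definition bounded_prob_density :: "(real \<Rightarrow> real) \<Rightarrow> bool" where
  "bounded_prob_density g \<longleftrightarrow>
     g \<in> borel_measurable borel \<and> (\<forall>x. 0 \<le> g x) \<and>
     prob_space (density lborel (\<lambda>x. ennreal (g x))) \<and> Linf_norm g < \<infinity>"

definition prod_measure_vec :: "('n::finite \<Rightarrow> real measure) \<Rightarrow> (real^'n) measure" where
  "prod_measure_vec M = distr (\<Pi>\<^sub>M i\<in>UNIV. M i) borel (\<lambda>f. \<chi> i. f i)"

definition prod_density_measure :: "('n::finite \<Rightarrow> real \<Rightarrow> real) \<Rightarrow> (real^'n) measure" where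
  "prod_density_measure g = prod_measure_vec (\<lambda>k. density lborel (\<lambda>x. ennreal (g k x)))"

definition minkowski_enlarge :: "'a::euclidean_space set \<Rightarrow> real \<Rightarrow> 'a set" where
  "minkowski_enlarge A \<epsilon> = {a + \<epsilon> *\<^sub>R b | a b. a \<in> A \<and> b \<in> cball 0 1}"

text \<open>Surface (outer Minkowski) measure mu^+(boundary A).  The measure of the (possibly
  non-Borel) set (A + eps B) - A is taken in the completion of mu.\<close>
definition boundary_measure :: "'a::euclidean_space measure \<Rightarrow> 'a set \<Rightarrow> ereal" where
  "boundary_measure \<mu> A =
     Liminf (at_right 0) (\<lambda>\<epsilon>. ereal (measure (completion \<mu>) (minkowski_enlarge A \<epsilon> - A) / \<epsilon>))"

definition convex_body :: "'a::euclidean_space set \<Rightarrow> bool" where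
  "convex_body A \<longleftrightarrow> compact A \<and> convex A \<and> interior A \<noteq> {}"

definition Gamma :: "'a::euclidean_space measure \<Rightarrow> ereal" where
  "Gamma \<mu> = (SUP A \<in> {A. convex_body A}. boundary_measure \<mu> A)"

end

theory Submission
  imports Defs
begin


lemma vec_meas: "(\<lambda>f. \<chi> i. f i) \<in> measurable (PiM (UNIV::'n::finite set) (\<lambda>k. density lborel (\<lambda>x. ennreal (g k x)))) (borel :: (real^'n) measure)"
proof -
  have "\<And>k. (\<lambda>f. f k) \<in> measurable (PiM (UNIV::'n::finite set) (\<lambda>k. density lborel (\<lambda>x. ennreal (g k x)))) borel"
  proof -
    fix k :: 'n
    have "(\<lambda>f. f k) \<in> measurable (PiM (UNIV::'n::finite set) (\<lambda>k. density lborel (\<lambda>x. ennreal (g k x)))) (density lborel (\<lambda>x. ennreal (g k x)))"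
      by (rule measurable_component_singleton) auto
    then show "(\<lambda>f. f k) \<in> measurable (PiM (UNIV::'n::finite set) (\<lambda>k. density lborel (\<lambda>x. ennreal (g k x)))) borel"
      by (simp add: measurable_def)
  qed
  then show ?thesis
    by (subst borel_measurable_euclidean_space) (auto simp: Basis_vec_def inner_axis)
qed



lemma fub:
  fixes g :: "'n::finite \<Rightarrow> real \<Rightarrow> real"
  assumes P: "\<And>k. prob_space (density lborel (\<lambda>x. ennreal (g k x)))" and S: "S \<in> sets (borel :: (real^'n) measure)"
  shows fub_meas: "(\<lambda>f. emeasure (density lborel (\<lambda>x. ennreal (g k x))) {x. (\<chi> i. if i = k then x else f i) \<in> S}) \<in> borel_measurable (PiM (UNIV-{k}) (\<lambda>k. density lborel (\<lambda>x. ennreal (g k x))))"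
    and fub_eq: "emeasure (prod_density_measure g) S =
    (\<integral>\<^sup>+f. emeasure (density lborel (\<lambda>x. ennreal (g k x))) {x. (\<chi> i. if i = k then x else f i) \<in> S} \<partial>(PiM (UNIV-{k}) (\<lambda>k. density lborel (\<lambda>x. ennreal (g k x)))))"
proof -
  let ?M = "\<lambda>k. density lborel (\<lambda>x. ennreal (g k x))"
  let ?R = "PiM (UNIV-{k}) ?M"
  let ?P = "PiM UNIV ?M"
  let ?u = "\<lambda>(x, X). X(k := x)"
  have U: "insert k (UNIV - {k}) = UNIV" by auto
  have eqP: "distr (?M k \<Otimes>\<^sub>M ?R) ?P ?u = ?P"
    using distr_pair_PiM_eq_PiM[of "UNIV-{k}" ?M k] P by (simp add: U)
  have um: "?u \<in> measurable (?M k \<Otimes>\<^sub>M ?R) ?P"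
  proof -
    have eq: "?u = (\<lambda>w i. (if i = k then fst w else snd w i))" by (auto simp: fun_eq_iff)
    show ?thesis unfolding eq
    proof (rule measurable_PiM_single')
      fix i :: 'n
      show "(\<lambda>w. if i = k then fst w else snd w i) \<in> measurable (?M k \<Otimes>\<^sub>M ?R) (?M i)"
      proof (cases "i = k")
        case True then show ?thesis by simp
      next
        case False then show ?thesis by simp
      qed
    qed (auto simp: space_pair_measure space_PiM PiE_def extensional_def)
  qed
  interpret R: prob_space ?R by (rule prob_space_PiM) (use P in auto)
  interpret Mk: prob_space "?M k" by (rule P)
  interpret pair_sigma_finite "?M k" ?R ..
  let ?Q = "?u -` ((\<lambda>f. \<chi> i. f i) -` S \<inter> space ?P) \<inter> space (?M k \<Otimes>\<^sub>M ?R)"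
  have Q: "?Q \<in> sets (?M k \<Otimes>\<^sub>M ?R)"
    using measurable_sets[OF um measurable_sets[OF vec_meas S]] by simp
  have secQ: "\<And>f. f \<in> space ?R \<Longrightarrow> (\<lambda>x. (x, f)) -` ?Q = {x. (\<chi> i. if i = k then x else f i) \<in> S}"
    by (auto simp: space_pair_measure space_PiM PiE_def extensional_def fun_upd_def)
  show "(\<lambda>f. emeasure (?M k) {x. (\<chi> i. if i = k then x else f i) \<in> S}) \<in> borel_measurable ?R"
  proof (rule measurable_cong[THEN iffD1])
    show "(\<lambda>f. emeasure (?M k) ((\<lambda>x. (x, f)) -` ?Q)) \<in> borel_measurable ?R"
      by (rule measurable_emeasure_Pair2[OF Q])
    show "\<And>w. w \<in> space ?R \<Longrightarrow> emeasure (?M k) ((\<lambda>x. (x, w)) -` ?Q) = emeasure (?M k) {x. (\<chi> i. if i = k then x else w i) \<in> S}"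
      by (simp only: secQ)
  qed
  have "emeasure (prod_density_measure g) S = emeasure ?P ((\<lambda>f. \<chi> i. f i) -` S \<inter> space ?P)"
    unfolding prod_density_measure_def prod_measure_vec_def
    by (rule emeasure_distr[OF vec_meas S])
  also have "\<dots> = emeasure (distr (?M k \<Otimes>\<^sub>M ?R) ?P ?u) ((\<lambda>f. \<chi> i. f i) -` S \<inter> space ?P)"
    by (simp add: eqP)
  also have "\<dots> = emeasure (?M k \<Otimes>\<^sub>M ?R) (?u -` ((\<lambda>f. \<chi> i. f i) -` S \<inter> space ?P) \<inter> space (?M k \<Otimes>\<^sub>M ?R))"
    apply (rule emeasure_distr[OF um])
    using measurable_sets[OF vec_meas S] by simp
  also have "\<dots> = (\<integral>\<^sup>+f. emeasure (?M k) ((\<lambda>x. (x, f)) -` (?u -` ((\<lambda>f. \<chi> i. f i) -` S \<inter> space ?P) \<inter> space (?M k \<Otimes>\<^sub>M ?R))) \<partial>?R)"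
    apply (rule emeasure_pair_measure_alt2)
    using measurable_sets[OF um measurable_sets[OF vec_meas S]] by simp
  also have "\<dots> = (\<integral>\<^sup>+f. emeasure (?M k) {x. (\<chi> i. if i = k then x else f i) \<in> S} \<partial>?R)"
    by (rule nn_integral_cong) (simp only: secQ)
  finally show "emeasure (prod_density_measure g) S = (\<integral>\<^sup>+f. emeasure (?M k) {x. (\<chi> i. if i = k then x else f i) \<in> S} \<partial>?R)" .
qed



lemma Linf_props:
  assumes "bounded_prob_density g"
  shows "0 \<le> Linf_norm g" "Linf_norm g < \<infinity>"
    "ereal (real_of_ereal (Linf_norm g)) = Linf_norm g"
    "AE x in lborel. g x \<le> real_of_ereal (Linf_norm g)"
proof -
  have gm: "g \<in> borel_measurable borel" and fin: "Linf_norm g < \<infinity>"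
    using assms unfolding bounded_prob_density_def by auto
  have m: "(\<lambda>x. ereal \<bar>g x\<bar>) \<in> borel_measurable lborel" using gm by simp
  have "esssup lborel (\<lambda>x::real. 0::ereal) \<le> esssup lborel (\<lambda>x. ereal \<bar>g x\<bar>)"
    by (rule esssup_mono) auto
  moreover have "esssup lborel (\<lambda>x::real. 0::ereal) = 0" by (rule esssup_const) simp
  ultimately show z: "0 \<le> Linf_norm g" unfolding Linf_norm_def by simp
  show "Linf_norm g < \<infinity>" by (rule fin)
  show e: "ereal (real_of_ereal (Linf_norm g)) = Linf_norm g"
    using z fin by (cases "Linf_norm g") auto
  have "AE x in lborel. ereal \<bar>g x\<bar> \<le> Linf_norm g"
    unfolding Linf_norm_def by (rule esssup_AE)
  then show "AE x in lborel. g x \<le> real_of_ereal (Linf_norm g)"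
  proof eventually_elim
    fix x assume "ereal \<bar>g x\<bar> \<le> Linf_norm g"
    then have "ereal \<bar>g x\<bar> \<le> ereal (real_of_ereal (Linf_norm g))" using e by simp
    then show "g x \<le> real_of_ereal (Linf_norm g)" by simp
  qed
qed

lemma interval_bound:
  assumes "bounded_prob_density g" "a \<le> b"
  shows "emeasure (density lborel (\<lambda>x. ennreal (g x))) {a..b} \<le> ennreal (real_of_ereal (Linf_norm g) * (b - a))"
proof -
  let ?L = "real_of_ereal (Linf_norm g)"
  have L0: "0 \<le> ?L" using Linf_props(1)[OF assms(1)] by (simp add: real_of_ereal_pos)
  have "emeasure (density lborel (\<lambda>x. ennreal (g x))) {a..b} = (\<integral>\<^sup>+x. ennreal (g x) * indicator {a..b} x \<partial>lborel)"
    using assms(1) unfolding bounded_prob_density_def by (simp add: emeasure_density)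
  also have "\<dots> \<le> (\<integral>\<^sup>+x. ennreal ?L * indicator {a..b} x \<partial>lborel)"
    apply (rule nn_integral_mono_AE)
    using Linf_props(4)[OF assms(1)] 
    by eventually_elim (auto simp: indicator_def ennreal_leI)
  also have "\<dots> = ennreal ?L * ennreal (b - a)"
    by (subst nn_integral_cmult_indicator) (use assms(2) in auto)
  also have "\<dots> = ennreal (?L * (b - a))" using L0 assms(2) by (simp add: ennreal_mult)
  finally show ?thesis .
qed

lemma one_dim:
  assumes "bounded_prob_density g" "convex (I::real set)" "0 \<le> e" "I \<in> sets borel"
  shows "emeasure (density lborel (\<lambda>x. ennreal (g x))) {y + t | y t. y \<in> I \<and> \<bar>t\<bar> \<le> e}
     \<le> emeasure (density lborel (\<lambda>x. ennreal (g x))) I + ennreal (2 * e * real_of_ereal (Linf_norm g))"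
proof -
  let ?N = "density lborel (\<lambda>x. ennreal (g x))"
  let ?L = "real_of_ereal (Linf_norm g)"
  have L0: "0 \<le> ?L" using Linf_props(1)[OF assms(1)] by (simp add: real_of_ereal_pos)
  have sub: "{y + t | y t. y \<in> I \<and> \<bar>t\<bar> \<le> e} \<subseteq> I \<union> {Inf I - e..Inf I} \<union> {Sup I..Sup I + e}"
  proof
    fix z assume "z \<in> {y + t | y t. y \<in> I \<and> \<bar>t\<bar> \<le> e}"
    then obtain y t where yt: "z = y + t" "y \<in> I" "\<bar>t\<bar> \<le> e" by auto
    show "z \<in> I \<union> {Inf I - e..Inf I} \<union> {Sup I..Sup I + e}"
    proof (cases "z \<in> I")
      case True then show ?thesis by auto
    next
      case False
      have "(\<forall>x\<in>I. z < x) \<or> (\<forall>x\<in>I. x < z)"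
      proof (rule ccontr)
        assume "\<not> ?thesis"
        then obtain x1 x2 where "x1 \<in> I" "x2 \<in> I" "x1 \<le> z" "z \<le> x2" by (auto simp: not_less)
        then have "z \<in> I" using assms(2) by (meson convexD_alt is_interval_convex_1 is_interval_1)
        then show False using False by simp
      qed
      then show ?thesis
      proof
        assume H: "\<forall>x\<in>I. z < x"
        have bd: "bdd_below I" using H by (meson bdd_belowI less_imp_le)
        have "z \<le> Inf I" using H yt(2) by (intro cInf_greatest) (auto intro: less_imp_le)
        moreover have "Inf I \<le> y" using bd yt(2) by (simp add: cInf_lower)
        ultimately show ?thesis using yt by auto
      next
        assume H: "\<forall>x\<in>I. x < z"
        have bd: "bdd_above I" using H by (meson bdd_aboveI less_imp_le)
        have "Sup I \<le> z" using H yt(2) by (intro cSup_least) (auto intro: less_imp_le)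
        moreover have "y \<le> Sup I" using bd yt(2) by (simp add: cSup_upper)
        ultimately show ?thesis using yt by auto
      qed
    qed
  qed
  have "emeasure ?N {y + t | y t. y \<in> I \<and> \<bar>t\<bar> \<le> e} \<le> emeasure ?N (I \<union> {Inf I - e..Inf I} \<union> {Sup I..Sup I + e})"
    by (rule emeasure_mono[OF sub]) (use assms(4) in simp)
  also have "\<dots> \<le> emeasure ?N (I \<union> {Inf I - e..Inf I}) + emeasure ?N {Sup I..Sup I + e}"
    by (rule emeasure_subadditive) (use assms(4) in auto)
  also have "\<dots> \<le> emeasure ?N I + emeasure ?N {Inf I - e..Inf I} + emeasure ?N {Sup I..Sup I + e}"
    by (intro add_mono emeasure_subadditive order_refl) (use assms(4) in auto)
  also have "\<dots> \<le> emeasure ?N I + ennreal (?L * e) + ennreal (?L * e)"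
    by (intro add_mono order_refl order_trans[OF interval_bound[OF assms(1)]]) (use assms(3) in auto)
  also have "\<dots> = emeasure ?N I + ennreal (2 * e * ?L)"
    using L0 assms(3) by (simp add: add.assoc ennreal_plus[symmetric] del: ennreal_plus)
  finally show ?thesis .
qed



definition segplus :: "(real^'n::finite) set \<Rightarrow> 'n \<Rightarrow> real \<Rightarrow> (real^'n) set" where
  "segplus C k e = {c + t *\<^sub>R axis k 1 | c t. c \<in> C \<and> \<bar>t\<bar> \<le> e}"

lemma upd_add: "(\<chi> i. if i = k then y + t else f i) = (\<chi> i. if i = k then y else f i) + t *\<^sub>R axis k (1::real)"
  by (simp add: vec_eq_iff axis_def)

lemma upd_meas: "(\<lambda>x. (\<chi> i. if i = k then x else f i) :: real^'n::finite) \<in> borel_measurable (borel :: real measure)"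
  by (subst borel_measurable_euclidean_space) (auto simp: Basis_vec_def inner_axis)

lemma sec_convex:
  assumes "convex C"
  shows "convex {x::real. (\<chi> i. if i = k then x else f i) \<in> C}"
  unfolding convex_def
proof safe
  fix x y u v :: real assume x: "(\<chi> i. if i = k then x else f i) \<in> C" and y: "(\<chi> i. if i = k then y else f i) \<in> C"
    and uv: "0 \<le> u" "0 \<le> v" "u + v = 1"
  have "(\<chi> i. if i = k then u *\<^sub>R x + v *\<^sub>R y else f i) = u *\<^sub>R (\<chi> i. if i = k then x else f i) + v *\<^sub>R (\<chi> i. if i = k then y else f i)"
  proof -
    have "\<And>i. f i = u * f i + v * f i" using uv(3) by (metis distrib_right mult_1)
    then show ?thesis by (simp add: vec_eq_iff)
  qed
  then show "(\<chi> i. if i = k then u *\<^sub>R x + v *\<^sub>R y else f i) \<in> C"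
    using convexD[OF assms x y uv] by simp
qed

lemma sec_segplus:
  "{x. (\<chi> i. if i = k then x else f i) \<in> segplus C k e} = {y + t | y t. y \<in> {x. (\<chi> i. if i = k then x else f i) \<in> C} \<and> \<bar>t\<bar> \<le> e}"
proof safe
  fix x assume "(\<chi> i. if i = k then x else f i) \<in> segplus C k e"
  then obtain c t where ct: "(\<chi> i. if i = k then x else f i) = c + t *\<^sub>R axis k 1" "c \<in> C" "\<bar>t\<bar> \<le> e"
    unfolding segplus_def by auto
  have "(\<chi> i. if i = k then x - t else f i) = c"
  proof -
    have "(\<chi> i. if i = k then x - t else f i) = (\<chi> i. if i = k then x else f i) - t *\<^sub>R axis k (1::real)"
      by (simp add: vec_eq_iff axis_def)
    then show ?thesis using ct(1) by simp
  qed
  then show "\<exists>y t. x = y + t \<and> y \<in> {x. (\<chi> i. if i = k then x else f i) \<in> C} \<and> \<bar>t\<bar> \<le> e"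
    using ct by (intro exI[of _ "x - t"] exI[of _ t]) auto
next
  fix y t assume "(\<chi> i. if i = k then y else f i) \<in> C" "\<bar>t\<bar> \<le> e"
  then show "(\<chi> i. if i = k then y + t else f i) \<in> segplus C k e"
    unfolding segplus_def upd_add by blast
qed

lemma step:
  fixes g :: "'n::finite \<Rightarrow> real \<Rightarrow> real"
  assumes bpd: "\<And>k. bounded_prob_density (g k)" and C: "convex C" "C \<in> sets borel"
    and SC: "segplus C k e \<in> sets borel" and e: "0 \<le> e"
  shows "emeasure (prod_density_measure g) (segplus C k e)
     \<le> emeasure (prod_density_measure g) C + ennreal (2 * e * real_of_ereal (Linf_norm (g k)))"
proof -
  let ?M = "\<lambda>k. density lborel (\<lambda>x. ennreal (g k x))"
  let ?R = "PiM (UNIV-{k}) ?M"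
  let ?c = "ennreal (2 * e * real_of_ereal (Linf_norm (g k)))"
  have P: "\<And>k. prob_space (?M k)" using bpd unfolding bounded_prob_density_def by auto
  interpret R: prob_space ?R by (rule prob_space_PiM) (use P in auto)
  have "emeasure (prod_density_measure g) (segplus C k e) =
    (\<integral>\<^sup>+f. emeasure (?M k) {x. (\<chi> i. if i = k then x else f i) \<in> segplus C k e} \<partial>?R)"
    by (rule fub_eq[OF P SC])
  also have "\<dots> \<le> (\<integral>\<^sup>+f. emeasure (?M k) {x. (\<chi> i. if i = k then x else f i) \<in> C} + ?c \<partial>?R)"
  proof (rule nn_integral_mono)
    fix f :: "'n \<Rightarrow> real"
    have sm: "{x. (\<chi> i. if i = k then x else f i) \<in> C} \<in> sets borel"
      using measurable_sets[OF upd_meas[where k=k and f=f] C(2)] by (simp add: vimage_def)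
    show "emeasure (?M k) {x. (\<chi> i. if i = k then x else f i) \<in> segplus C k e}
        \<le> emeasure (?M k) {x. (\<chi> i. if i = k then x else f i) \<in> C} + ?c"
      unfolding sec_segplus by (rule one_dim[OF bpd sec_convex[OF C(1)] e sm])
  qed
  also have "\<dots> = (\<integral>\<^sup>+f. emeasure (?M k) {x. (\<chi> i. if i = k then x else f i) \<in> C} \<partial>?R) + (\<integral>\<^sup>+f. ?c \<partial>?R)"
    by (rule nn_integral_add) (auto intro: fub_meas[OF P C(2)])
  also have "\<dots> = emeasure (prod_density_measure g) C + ?c"
    using fub_eq[OF P C(2), where k=k] by (simp add: R.emeasure_space_1)
  finally show ?thesis .
qed



definition boxK :: "'n::finite set \<Rightarrow> real \<Rightarrow> (real^'n) set" where
  "boxK K e = cbox (\<chi> i. if i \<in> K then -e else 0) (\<chi> i. if i \<in> K then e else 0)"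

definition plusbox :: "(real^'n::finite) set \<Rightarrow> 'n set \<Rightarrow> real \<Rightarrow> (real^'n) set" where
  "plusbox C K e = (\<Union>c\<in>C. \<Union>v\<in>boxK K e. {c + v})"

lemma mem_boxK: "v \<in> boxK K e \<longleftrightarrow> (\<forall>i. (i \<in> K \<longrightarrow> \<bar>v$i\<bar> \<le> e) \<and> (i \<notin> K \<longrightarrow> v$i = 0))"
  unfolding boxK_def mem_box_cart by (auto simp: abs_le_iff) (metis order.antisym)+

lemma plusbox_empty: "plusbox C {} e = C"
proof -
  have "v \<in> boxK {} e \<longleftrightarrow> v = 0" for v :: "real^'a"
    unfolding mem_boxK by (auto simp: vec_eq_iff)
  then show ?thesis unfolding plusbox_def by auto
qed

lemma plusbox_insert:
  assumes "k \<notin> K"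
  shows "plusbox C (insert k K) e = segplus (plusbox C K e) k e"
proof
  show "plusbox C (insert k K) e \<subseteq> segplus (plusbox C K e) k e"
  proof
    fix x assume "x \<in> plusbox C (insert k K) e"
    then obtain c v where cv: "c \<in> C" "v \<in> boxK (insert k K) e" "x = c + v"
      unfolding plusbox_def by auto
    define v' where "v' = v - (v$k) *\<^sub>R axis k (1::real)"
    have "v' \<in> boxK K e" using cv(2) assms unfolding mem_boxK v'_def by (auto simp: axis_def)
    moreover have "\<bar>v$k\<bar> \<le> e" using cv(2) unfolding mem_boxK by auto
    moreover have "x = (c + v') + (v$k) *\<^sub>R axis k 1" unfolding v'_def cv(3) by simp
    ultimately show "x \<in> segplus (plusbox C K e) k e"
      unfolding segplus_def plusbox_def using cv(1) by blast
  qed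
next
  show "segplus (plusbox C K e) k e \<subseteq> plusbox C (insert k K) e"
  proof
    fix x assume "x \<in> segplus (plusbox C K e) k e"
    then obtain c v t where cv: "c \<in> C" "v \<in> boxK K e" "x = c + v + t *\<^sub>R axis k 1" "\<bar>t\<bar> \<le> e"
      unfolding plusbox_def segplus_def by auto
    have "v + t *\<^sub>R axis k 1 \<in> boxK (insert k K) e"
      using cv(2,4) assms unfolding mem_boxK by (auto simp: axis_def)
    then show "x \<in> plusbox C (insert k K) e"
      unfolding plusbox_def cv(3) using cv(1) by (auto simp: add.assoc)
  qed
qed

lemma plusbox_props:
  assumes "convex C"
  shows "convex (plusbox C K e)" "closed C \<Longrightarrow> closed (plusbox C K e)" "open C \<Longrightarrow> open (plusbox C K e)"
  unfolding plusbox_def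
  using convex_sums[OF assms convex_box(1)] closed_compact_sums[OF _ compact_cbox] open_sums[of C]
  unfolding boxK_def by auto

lemma multi_step:
  fixes g :: "'n::finite \<Rightarrow> real \<Rightarrow> real"
  assumes bpd: "\<And>k. bounded_prob_density (g k)" and C: "convex C" "closed C \<or> open C" and e: "0 \<le> e"
  shows "emeasure (prod_density_measure g) (plusbox C K e)
     \<le> emeasure (prod_density_measure g) C + ennreal (2 * e * (\<Sum>k\<in>K. real_of_ereal (Linf_norm (g k))))"
proof -
  have K: "finite K" by simp
  have L0: "\<And>k. 0 \<le> real_of_ereal (Linf_norm (g k))"
    using Linf_props(1)[OF bpd] by (simp add: real_of_ereal_pos)
  have meas: "\<And>K. plusbox C K e \<in> sets borel"
    using C plusbox_props[OF C(1)] by (auto intro: borel_closed borel_open)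
  from K show ?thesis
  proof (induction K rule: finite_induct)
    case empty then show ?case by (simp add: plusbox_empty)
  next
    case (insert k K)
    have "emeasure (prod_density_measure g) (plusbox C (insert k K) e)
        = emeasure (prod_density_measure g) (segplus (plusbox C K e) k e)"
      by (simp add: plusbox_insert insert(2))
    also have "\<dots> \<le> emeasure (prod_density_measure g) (plusbox C K e) + ennreal (2 * e * real_of_ereal (Linf_norm (g k)))"
      apply (rule step[OF bpd plusbox_props(1)[OF C(1)] meas])
      using meas[of "insert k K"] e by (simp_all add: plusbox_insert insert(2))
    also have "\<dots> \<le> emeasure (prod_density_measure g) C + ennreal (2 * e * (\<Sum>k\<in>K. real_of_ereal (Linf_norm (g k)))) + ennreal (2 * e * real_of_ereal (Linf_norm (g k)))"
      by (rule add_right_mono[OF insert(3)])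
    also have "\<dots> = emeasure (prod_density_measure g) C + ennreal (2 * e * (\<Sum>k\<in>insert k K. real_of_ereal (Linf_norm (g k))))"
      using insert(1,2) L0 e
      by (simp add: add.assoc ennreal_plus[symmetric] sum_nonneg algebra_simps del: ennreal_plus)
    finally show ?case .
  qed
qed



lemma mu_prob:
  fixes g :: "'n::finite \<Rightarrow> real \<Rightarrow> real"
  assumes bpd: "\<And>k. bounded_prob_density (g k)"
  shows "prob_space (prod_density_measure g)" "sets (prod_density_measure g) = sets borel"
proof -
  have P: "\<And>k. prob_space (density lborel (\<lambda>x. ennreal (g k x)))" using bpd unfolding bounded_prob_density_def by auto
  interpret P: prob_space "PiM (UNIV::'n set) (\<lambda>k. density lborel (\<lambda>x. ennreal (g k x)))"
    by (rule prob_space_PiM) (use P in auto)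
  show "prob_space (prod_density_measure g)"
    unfolding prod_density_measure_def prod_measure_vec_def
    by (rule P.prob_space_distr[OF vec_meas])
  show "sets (prod_density_measure g) = sets borel"
    unfolding prod_density_measure_def prod_measure_vec_def by simp
qed

lemma diff_bound:
  fixes g :: "'n::finite \<Rightarrow> real \<Rightarrow> real"
  assumes bpd: "\<And>k. bounded_prob_density (g k)" and C: "convex C" "closed C \<or> open C" and e: "0 \<le> e"
  shows "measure (prod_density_measure g) (plusbox C UNIV e - C) \<le> 2 * e * (\<Sum>k\<in>UNIV. real_of_ereal (Linf_norm (g k)))"
proof -
  let ?m = "prod_density_measure g"
  let ?Ls = "\<Sum>k\<in>UNIV. real_of_ereal (Linf_norm (g k))"
  interpret prob_space ?m by (rule mu_prob[where g=g, OF bpd])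
  have L0: "0 \<le> ?Ls"
    using Linf_props(1)[OF bpd] by (simp add: real_of_ereal_pos sum_nonneg)
  have sets: "sets ?m = sets borel" by (rule mu_prob(2)[where g=g, OF bpd])
  have mb: "plusbox C UNIV e \<in> sets ?m" "C \<in> sets ?m"
    using C plusbox_props[OF C(1)] unfolding sets by (auto intro: borel_closed borel_open)
  have sub: "C \<subseteq> plusbox C UNIV e"
  proof
    fix c assume "c \<in> C"
    moreover have "0 \<in> boxK UNIV e" using e unfolding mem_boxK by auto
    ultimately show "c \<in> plusbox C UNIV e" unfolding plusbox_def by force
  qed
  have "ennreal (measure ?m (plusbox C UNIV e)) \<le> ennreal (measure ?m C) + ennreal (2 * e * ?Ls)"
    using multi_step[where g=g, OF bpd C e, where K=UNIV] by (simp add: emeasure_eq_measure)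
  then have "measure ?m (plusbox C UNIV e) \<le> measure ?m C + 2 * e * ?Ls"
    using L0 e by (simp add: ennreal_plus[symmetric] del: ennreal_plus)
  then show ?thesis
    using finite_measure_Diff[OF mb sub] by simp
qed

lemma small_zero:
  fixes x c :: real
  assumes "\<And>d. d > 0 \<Longrightarrow> x \<le> 2 * d * c" "0 \<le> x" "0 \<le> c"
  shows "x = 0"
proof (rule ccontr)
  assume "x \<noteq> 0"
  then have xp: "x > 0" using assms(2) by simp
  define d where "d = x / (4 * c + 1)"
  have dp: "d > 0" unfolding d_def using xp assms(3) by simp
  have "2 * d * c < x"
  proof -
    have "2 * c < 4 * c + 1" using assms(3) by simp
    then have "2 * c * x < (4 * c + 1) * x" using xp by simp
    then show ?thesis unfolding d_def using assms(3) by (simp add: field_simps)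
  qed
  then show False using assms(1)[OF dp] by simp
qed

lemma frontier_null:
  fixes g :: "'n::finite \<Rightarrow> real \<Rightarrow> real"
  assumes bpd: "\<And>k. bounded_prob_density (g k)" and A: "convex (A :: (real^'n) set)"
  shows "measure (prod_density_measure g) (closure A - interior A) = 0"
proof -
  let ?m = "prod_density_measure g"
  let ?Ls = "\<Sum>k\<in>UNIV. real_of_ereal (Linf_norm (g k))"
  interpret prob_space ?m by (rule mu_prob[where g=g, OF bpd])
  have L0: "0 \<le> ?Ls"
    using Linf_props(1)[OF bpd] by (simp add: real_of_ereal_pos sum_nonneg)
  have sets: "sets ?m = sets borel" by (rule mu_prob(2)[where g=g, OF bpd])
  have "\<exists>C. convex C \<and> open C \<and> closure A - interior A \<subseteq> plusbox C UNIV d - C" if d: "d > 0" for d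
  proof (cases "interior A = {}")
    case False
    have "closure A \<subseteq> plusbox (interior A) UNIV d"
    proof
      fix x assume "x \<in> closure A"
      then have "x \<in> closure (interior A)" using convex_closure_interior[OF A False] by simp
      then obtain y where y: "y \<in> interior A" "dist y x < d" using d closure_approachable by metis
      have "x - y \<in> boxK UNIV d"
        unfolding mem_boxK
      proof safe
        fix i
        have "\<bar>(x - y)$i\<bar> \<le> norm (x - y)" by (rule component_le_norm_cart)
        also have "\<dots> < d" using y(2) by (simp add: dist_norm norm_minus_commute)
        finally show "\<bar>(x - y)$i\<bar> \<le> d" by simp
      qed simp
      then have "y + (x - y) \<in> plusbox (interior A) UNIV d"
        unfolding plusbox_def using y(1) by blast
      then show "x \<in> plusbox (interior A) UNIV d" by simp
    qed
    then show ?thesis using A by (intro exI[of _ "interior A"]) (auto simp: convex_interior)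
  next
    case True
    obtain a b where ab: "a \<noteq> 0" "A \<subseteq> {x. a \<bullet> x = b}"
      using empty_interior_subset_hyperplane[OF A True] by metis
    have cl: "closure A \<subseteq> {x. a \<bullet> x = b}"
      using ab(2) closed_hyperplane closure_minimal by blast
    obtain k where k: "a$k \<noteq> 0" using ab(1) by (metis vec_eq_iff zero_index)
    let ?H = "{x. a \<bullet> x < b}"
    have "{x. a \<bullet> x = b} \<subseteq> plusbox ?H UNIV d - ?H"
    proof
      fix x assume x: "x \<in> {x. a \<bullet> x = b}"
      define t where "t = d * sgn (a$k)"
      have "a \<bullet> (x - t *\<^sub>R axis k 1) = b - t * a$k"
        using x by (simp add: inner_diff_right inner_axis)
      also have "t * a$k = d * \<bar>a$k\<bar>" unfolding t_def by (simp add: abs_sgn mult.assoc)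
      finally have "a \<bullet> (x - t *\<^sub>R axis k 1) < b" using d k by simp
      moreover have "t *\<^sub>R axis k 1 \<in> boxK UNIV d"
        unfolding mem_boxK t_def using d by (auto simp: axis_def abs_mult abs_sgn_eq)
      ultimately have "(x - t *\<^sub>R axis k 1) + t *\<^sub>R axis k 1 \<in> plusbox ?H UNIV d"
        unfolding plusbox_def by blast
      then have "x \<in> plusbox ?H UNIV d" by simp
      then show "x \<in> plusbox ?H UNIV d - ?H" using x by simp
    qed
    then show ?thesis using cl
      by (intro exI[of _ ?H]) (auto simp: convex_halfspace_lt open_halfspace_lt)
  qed
  then have "measure ?m (closure A - interior A) \<le> 2 * d * ?Ls" if d: "d > 0" for d
  proof -
    obtain C where C: "convex C" "open C" "closure A - interior A \<subseteq> plusbox C UNIV d - C"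
      using \<open>\<And>d. d > 0 \<Longrightarrow> _\<close>[OF d] by blast
    have "measure ?m (closure A - interior A) \<le> measure ?m (plusbox C UNIV d - C)"
      apply (rule finite_measure_mono[OF C(3)])
      using C plusbox_props[OF C(1)] sets by (auto intro: borel_closed borel_open)
    also have "\<dots> \<le> 2 * d * ?Ls" using diff_bound[where g=g, OF bpd C(1) _ less_imp_le[OF d]] C(2) by blast
    finally show ?thesis .
  qed
  then show ?thesis by (intro small_zero[OF _ _ L0]) auto
qed



lemma part1:
  fixes g :: "'n::finite \<Rightarrow> real \<Rightarrow> real"
  assumes bpd: "\<And>k. bounded_prob_density (g k)" and A: "convex (A :: (real^'n) set)"
  shows "boundary_measure (prod_density_measure g) A \<le> 2 * (\<Sum>k\<in>UNIV. Linf_norm (g k))"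
proof -
  let ?m = "prod_density_measure g"
  let ?Ls = "\<Sum>k\<in>UNIV. real_of_ereal (Linf_norm (g k))"
  interpret prob_space ?m by (rule mu_prob[where g=g, OF bpd])
  have sets: "sets ?m = sets borel" by (rule mu_prob(2)[where g=g, OF bpd])
  have cA: "convex (closure A)" "closed (closure A)" using A by (auto simp: convex_closure)
  have eps: "measure (completion ?m) (minkowski_enlarge A e - A) \<le> 2 * e * ?Ls" if e: "e > 0" for e
  proof -
    let ?P = "plusbox (closure A) UNIV e"
    let ?X = "?P - interior A"
    have Pm: "?P \<in> sets ?m" using plusbox_props(2)[OF cA(1) cA(2)] sets by (auto intro: borel_closed)
    have Xm: "?X \<in> sets ?m" using plusbox_props(2)[OF cA(1) cA(2)] sets by (auto intro: borel_closed borel_open)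
    have sub: "minkowski_enlarge A e - A \<subseteq> ?X"
    proof
      fix x assume "x \<in> minkowski_enlarge A e - A"
      then obtain a b where ab: "x = a + e *\<^sub>R b" "a \<in> A" "b \<in> cball 0 1" "x \<notin> A"
        unfolding minkowski_enlarge_def by auto
      have "e *\<^sub>R b \<in> boxK UNIV e"
        unfolding mem_boxK
      proof safe
        fix i
        have "\<bar>b$i\<bar> \<le> norm b" by (rule component_le_norm_cart)
        also have "\<dots> \<le> 1" using ab(3) by simp
        finally show "\<bar>(e *\<^sub>R b)$i\<bar> \<le> e" using e by (simp add: abs_mult)
      qed simp
      moreover have "a \<in> closure A" using ab(2) closure_subset by blast
      ultimately have "x \<in> ?P" unfolding plusbox_def ab(1) by blast
      moreover have "x \<notin> interior A" using ab(4) interior_subset by blast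
      ultimately show "x \<in> ?X" by simp
    qed
    have mX: "measure (completion ?m) (minkowski_enlarge A e - A) \<le> measure ?m ?X"
    proof (cases "minkowski_enlarge A e - A \<in> sets (completion ?m)")
      case True
      have "emeasure (completion ?m) (minkowski_enlarge A e - A) \<le> emeasure (completion ?m) ?X"
        by (rule emeasure_mono[OF sub]) (use Xm in simp)
      also have "\<dots> = emeasure ?m ?X" using Xm by simp
      finally show ?thesis unfolding measure_def
        by (intro enn2real_mono) (auto simp: emeasure_eq_measure)
    next
      case False
      then show ?thesis by (simp add: measure_notin_sets)
    qed
    have "?X \<subseteq> (?P - closure A) \<union> (closure A - interior A)" by blast
    then have "measure ?m ?X \<le> measure ?m ((?P - closure A) \<union> (closure A - interior A))"
      by (rule finite_measure_mono) (use Pm sets in \<open>auto intro: borel_closed borel_open\<close>)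
    also have "\<dots> \<le> measure ?m (?P - closure A) + measure ?m (closure A - interior A)"
      by (rule measure_Un_le) (use Pm sets in \<open>auto intro: borel_closed borel_open\<close>)
    also have "\<dots> \<le> 2 * e * ?Ls + 0"
      using diff_bound[where g=g, OF bpd cA(1) _ less_imp_le[OF e]] cA(2) frontier_null[where g=g, OF bpd A]
      by (intro add_mono) auto
    finally show ?thesis using mX by simp
  qed
  have "boundary_measure ?m A \<le> ereal (2 * ?Ls)"
    unfolding boundary_measure_def
  proof (rule Liminf_le)
    show "at_right (0::real) \<noteq> bot" by simp
    show "\<forall>\<^sub>F e in at_right 0. ereal (measure (completion ?m) (minkowski_enlarge A e - A) / e) \<le> ereal (2 * ?Ls)"
      using eventually_at_right_less[of "0::real"]
    proof eventually_elim
      case (elim e)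
      then show ?case using eps[OF elim] by (simp add: divide_le_eq mult.commute mult.left_commute)
    qed
  qed
  also have "ereal (2 * ?Ls) = 2 * (\<Sum>k\<in>UNIV. Linf_norm (g k))"
  proof -
    have "(\<Sum>k\<in>UNIV. Linf_norm (g k)) = (\<Sum>k\<in>UNIV. ereal (real_of_ereal (Linf_norm (g k))))"
      using Linf_props(3)[OF bpd] by simp
    also have "\<dots> = ereal ?Ls" by simp
    finally show ?thesis by simp
  qed
  finally show ?thesis .
qed



lemma box_measure:
  fixes g :: "'n::finite \<Rightarrow> real \<Rightarrow> real"
  assumes bpd: "\<And>k. bounded_prob_density (g k)" and I: "\<And>i. I i \<in> sets borel"
  shows "emeasure (prod_density_measure g) {x. \<forall>i. x$i \<in> I i} = (\<Prod>i\<in>UNIV. emeasure (density lborel (\<lambda>x. ennreal (g i x))) (I i))"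
proof -
  let ?M = "\<lambda>k. density lborel (\<lambda>x. ennreal (g k x))"
  have P: "\<And>k. prob_space (?M k)" using bpd unfolding bounded_prob_density_def by auto
  interpret product_sigma_finite ?M
    unfolding product_sigma_finite_def using P prob_space_imp_sigma_finite by blast
  have bm: "{x::real^'n. \<forall>i. x$i \<in> I i} \<in> sets borel"
  proof -
    have eq: "{x::real^'n. \<forall>i. x$i \<in> I i} = (\<Inter>i. (\<lambda>x. x$i) -` I i)" by auto
    have mi: "(\<lambda>x::real^'n. x$i) -` I i \<in> sets borel" for i
    proof -
      have "(\<lambda>x::real^'n. x$i) \<in> borel_measurable borel" by simp
      from measurable_sets[OF this I[of i]] show ?thesis by simp
    qed
    have "(\<Inter>i. (\<lambda>x::real^'n. x$i) -` I i) \<in> sets borel"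
      by (intro sets.countable_INT') (auto intro: mi)
    then show ?thesis unfolding eq .
  qed
  have "emeasure (prod_density_measure g) {x. \<forall>i. x$i \<in> I i} = emeasure (PiM UNIV ?M) ((\<lambda>f. \<chi> i. f i) -` {x. \<forall>i. x$i \<in> I i} \<inter> space (PiM UNIV ?M))"
    unfolding prod_density_measure_def prod_measure_vec_def
    by (rule emeasure_distr[OF vec_meas bm])
  also have "(\<lambda>f. \<chi> i. f i) -` {x. \<forall>i. x$i \<in> I i} \<inter> space (PiM UNIV ?M) = PiE UNIV I"
    by (auto simp: space_PiM PiE_def Pi_def)
  also have "emeasure (PiM UNIV ?M) (PiE UNIV I) = (\<Prod>i\<in>UNIV. emeasure (?M i) (I i))"
    by (rule emeasure_PiM) (use I in auto)
  finally show ?thesis .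
qed

definition unif :: "real \<Rightarrow> real" where "unif = indicator {0..1}"

lemma unif_density: "density lborel (\<lambda>x. ennreal (unif x)) = density lborel (indicator {0..1})"
  unfolding unif_def by (simp add: ennreal_indicator)

lemma unif_emeasure: "I \<in> sets borel \<Longrightarrow> emeasure (density lborel (\<lambda>x. ennreal (unif x))) I = emeasure lborel ({0..1} \<inter> I)"
  unfolding unif_density by (rule emeasure_restricted) auto

lemma unif_bpd: "bounded_prob_density unif"
  unfolding bounded_prob_density_def
proof (intro conjI allI)
  show "unif \<in> borel_measurable borel" unfolding unif_def by simp
  show "0 \<le> unif x" for x unfolding unif_def by simp
  show "prob_space (density lborel (\<lambda>x. ennreal (unif x)))"
    by (rule prob_spaceI) (simp add: unif_emeasure)
  have "Linf_norm unif \<le> 1"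
    unfolding Linf_norm_def by (rule esssup_I) (auto simp: unif_def indicator_def)
  then show "Linf_norm unif < \<infinity>" by (rule order.strict_trans1) simp
qed

lemma unif_Linf: "Linf_norm unif \<le> 1"
  unfolding Linf_norm_def by (rule esssup_I) (auto simp: unif_def indicator_def)



lemma cube_lower:
  fixes d :: real
  assumes d: "0 < d" "d \<le> 1/4"
  defines "A \<equiv> cbox (\<chi> i. d) (\<chi> i. 1 - d) :: (real^'n::finite) set"
  shows "ereal (2 * real CARD('n) * (1 - 2*d) ^ (CARD('n) - 1)) \<le> boundary_measure (prod_density_measure (\<lambda>k::'n. unif)) A"
proof -
  let ?m = "prod_density_measure (\<lambda>k::'n. unif)"
  let ?N = "density lborel (\<lambda>x. ennreal (unif x))"
  let ?n = "CARD('n)"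
  let ?c = "(1 - 2*d) ^ (?n - 1)"
  have bpd: "\<And>k::'n. bounded_prob_density unif" by (rule unif_bpd)
  interpret prob_space ?m by (rule mu_prob[where g="\<lambda>k. unif", OF bpd])
  have sets: "sets ?m = sets borel" by (rule mu_prob(2)[where g="\<lambda>k. unif", OF bpd])
  have memA: "x \<in> A \<longleftrightarrow> (\<forall>i. d \<le> x$i \<and> x$i \<le> 1 - d)" for x
    unfolding A_def mem_box_cart by simp
  have key: "2 * real ?n * e * ?c \<le> measure (completion ?m) (minkowski_enlarge A e - A)" if e: "0 < e" "e \<le> d" for e
  proof -
    define J where "J = {d - e..<d} \<union> {1 - d<..1 - d + e}"
    define F where "F k = {x::real^'n. \<forall>i. x$i \<in> (if i = k then J else {d..1-d})}" for k
    have Jb: "J \<in> sets borel" unfolding J_def by simp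
    have NJ: "emeasure ?N J = ennreal (2 * e)"
    proof -
      have "emeasure ?N J = emeasure lborel ({0..1} \<inter> J)" by (rule unif_emeasure[OF Jb])
      also have "{0..1} \<inter> J = J" unfolding J_def using d e by auto
      also have "emeasure lborel J = emeasure lborel {d - e..<d} + emeasure lborel {1 - d<..1 - d + e}"
        unfolding J_def by (rule plus_emeasure[symmetric]) (use d e in auto)
      also have "\<dots> = ennreal (2 * e)" using e by (simp add: ennreal_plus[symmetric] del: ennreal_plus)
      finally show ?thesis .
    qed
    have NI: "emeasure ?N {d..1-d} = ennreal (1 - 2 * d)"
      using d by (simp add: unif_emeasure)
    have Fm: "emeasure ?m (F k) = ennreal (2 * e * ?c)" for k
    proof -
      have "emeasure ?m (F k) = (\<Prod>i\<in>UNIV. emeasure ?N (if i = k then J else {d..1-d}))"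
        unfolding F_def by (rule box_measure[where g="\<lambda>k. unif", OF bpd]) (use Jb in auto)
      also have "\<dots> = (\<Prod>i\<in>UNIV. if i = k then ennreal (2 * e) else ennreal (1 - 2 * d))"
        by (rule prod.cong) (auto simp: NJ NI)
      also have "\<dots> = ennreal (2 * e) * ennreal (1 - 2 * d) ^ (?n - 1)"
        by (subst prod_gen_delta) auto
      also have "\<dots> = ennreal (2 * e * ?c)"
        using d e by (simp add: ennreal_power ennreal_mult)
      finally show ?thesis .
    qed
    have Fs: "F k \<in> sets ?m" for k
    proof -
      have "F k = {x::real^'n. \<forall>i. x$i \<in> (if i = k then J else {d..1-d})}" by (simp add: F_def)
      have "emeasure ?m (F k) \<noteq> 0" using Fm[of k] d e by simp
      then show ?thesis using emeasure_notin_sets by blast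
    qed
    have disj: "disjoint_family_on F UNIV"
      unfolding disjoint_family_on_def
    proof (intro ballI impI)
      fix k j :: 'n assume kj: "k \<noteq> j"
      show "F k \<inter> F j = {}"
      proof (rule ccontr)
        assume "F k \<inter> F j \<noteq> {}"
        then obtain x where x1: "x \<in> F k" and x2: "x \<in> F j" by blast
        have "x$k \<in> J" using x1 unfolding F_def by (metis (mono_tags, lifting) mem_Collect_eq)
        moreover have "x$k \<in> {d..1-d}" using x2 kj unfolding F_def by (metis (mono_tags, lifting) mem_Collect_eq)
        ultimately show False unfolding J_def by auto
      qed
    qed
    have emU: "emeasure ?m (\<Union>k. F k) = ennreal (2 * real ?n * e * ?c)"
    proof -
      have "emeasure ?m (\<Union>k. F k) = (\<Sum>k\<in>UNIV. emeasure ?m (F k))"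
        by (rule sum_emeasure[symmetric]) (use Fs disj in auto)
      also have "\<dots> = ennreal (2 * real ?n * e * ?c)"
        using d e by (simp add: Fm ennreal_of_nat_eq_real_of_nat ennreal_mult[symmetric])
      finally show ?thesis .
    qed
    have Esub: "(\<Union>k. F k) \<subseteq> minkowski_enlarge A e - A"
    proof
      fix x assume "x \<in> (\<Union>k. F k)"
      then obtain k where x: "\<forall>i. x$i \<in> (if i = k then J else {d..1-d})" unfolding F_def by auto
      have xk: "x$k \<in> J" and xi: "\<And>i. i \<noteq> k \<Longrightarrow> d \<le> x$i \<and> x$i \<le> 1 - d"
        using x by (metis, metis atLeastAtMost_iff)
      define p where "p = (if x$k < d then d else 1 - d)"
      define a where "a = (\<chi> i. if i = k then p else x$i)"
      define b where "b = ((x$k - p) / e) *\<^sub>R axis k (1::real)"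
      have pd: "d \<le> p \<and> p \<le> 1 - d" unfolding p_def using d by auto
      have aA: "a \<in> A" unfolding memA a_def using pd xi by auto
      have "\<bar>x$k - p\<bar> \<le> e" using xk d e unfolding J_def p_def by auto
      then have "norm b \<le> 1" unfolding b_def using e by (simp add: abs_div)
      then have bB: "b \<in> cball 0 1" by simp
      have xab: "x = a + e *\<^sub>R b" unfolding a_def b_def using e by (simp add: vec_eq_iff axis_def)
      have "\<not> (d \<le> x$k \<and> x$k \<le> 1 - d)" using xk d e unfolding J_def by auto
      then have "x \<notin> A" unfolding memA by blast
      then show "x \<in> minkowski_enlarge A e - A" unfolding minkowski_enlarge_def using aA bB xab by blast
    qed
    have Ec: "compact (minkowski_enlarge A e)"
    proof -
      have "minkowski_enlarge A e = {x + y | x y. x \<in> A \<and> y \<in> (\<lambda>b. e *\<^sub>R b) ` cball 0 1}"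
        unfolding minkowski_enlarge_def
        apply (auto simp: image_iff)
        subgoal for a b by (intro exI[of _ a] exI[of _ "e *\<^sub>R b"]) auto
        subgoal for a b by (intro exI[of _ a] exI[of _ b]) auto
        done
      also have "compact \<dots>"
        by (rule compact_sums) (auto simp: A_def intro: compact_scaling)
      finally show ?thesis .
    qed
    have EAs: "minkowski_enlarge A e - A \<in> sets ?m"
    proof -
      have "minkowski_enlarge A e \<in> sets borel" by (rule borel_closed[OF compact_imp_closed[OF Ec]])
      moreover have "A \<in> sets borel" unfolding A_def by (rule borel_closed) (rule closed_cbox)
      ultimately show ?thesis unfolding sets by (rule sets.Diff)
    qed
    have "2 * real ?n * e * ?c = measure ?m (\<Union>k. F k)"
      using emU d e by (simp add: measure_def)
    also have "\<dots> \<le> measure ?m (minkowski_enlarge A e - A)"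
      by (rule finite_measure_mono[OF Esub EAs])
    also have "\<dots> = measure (completion ?m) (minkowski_enlarge A e - A)"
      using EAs by simp
    finally show ?thesis .
  qed
  show ?thesis
    unfolding boundary_measure_def
  proof (rule Liminf_bounded)
    show "\<forall>\<^sub>F e in at_right 0. ereal (2 * real ?n * ?c) \<le> ereal (measure (completion ?m) (minkowski_enlarge A e - A) / e)"
      unfolding eventually_at_right_field
    proof (intro exI[of _ d] conjI allI impI)
      show "0 < d" by (rule d(1))
      fix e :: real assume "0 < e" "e < d"
      then show "ereal (2 * real ?n * ?c) \<le> ereal (measure (completion ?m) (minkowski_enlarge A e - A) / e)"
        using key[of e] by (simp add: le_divide_eq mult.commute mult.left_commute)
    qed
  qed
qed



lemma arith_choice:
  fixes c l :: real and n :: nat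
  assumes c: "c < 2" and n: "n \<ge> 1" and l: "0 \<le> l" "l \<le> 1"
  defines "d \<equiv> min (1/4) ((2 - c) / (8 * real n))"
  shows "0 < d" "d \<le> 1/4" "c * (real n * l) < 2 * real n * (1 - 2*d) ^ (n - 1)"
proof -
  have np: "real n > 0" using n by simp
  show dp: "0 < d" unfolding d_def using c np by simp
  show d4: "d \<le> 1/4" unfolding d_def by simp
  have "1 + real (n - 1) * (- 2 * d) \<le> (1 + (- 2 * d)) ^ (n - 1)"
    by (rule Bernoulli_inequality) (use d4 in simp)
  then have B: "1 - 2 * d * real (n - 1) \<le> (1 - 2*d) ^ (n - 1)" by (simp add: algebra_simps)
  have "2 * d * real (n - 1) \<le> 2 * d * real n" using dp by (simp add: of_nat_diff n)
  also have "\<dots> \<le> 2 * ((2 - c) / (8 * real n)) * real n"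
    using np unfolding d_def by (intro mult_right_mono mult_left_mono) auto
  also have "\<dots> = (2 - c) / 4" using np by (simp add: field_simps)
  finally have P: "(2 + c) / 4 \<le> (1 - 2*d) ^ (n - 1)" using B by simp
  have "2 * real n * ((2 + c) / 4) \<le> 2 * real n * (1 - 2*d) ^ (n - 1)"
    by (rule mult_left_mono[OF P]) (use np in simp)
  then have R: "real n * (2 + c) / 2 \<le> 2 * real n * (1 - 2*d) ^ (n - 1)" by (simp add: field_simps)
  show "c * (real n * l) < 2 * real n * (1 - 2*d) ^ (n - 1)"
  proof (cases "c \<le> 0")
    case True
    have "c * (real n * l) \<le> 0" using True np l by (simp add: mult_nonpos_nonneg)
    moreover have "0 < (1 - 2*d) ^ (n - 1)" using d4 by simp
    then have "0 < 2 * real n * (1 - 2*d) ^ (n - 1)" using np by simp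
    ultimately show ?thesis by linarith
  next
    case False
    have "c * (real n * l) \<le> c * real n" using False l np by (intro mult_left_mono) (auto simp: mult_le_cancel_left1)
    also have "\<dots> < real n * (2 + c) / 2" using c np by (simp add: field_simps)
    finally show ?thesis using R by simp
  qed
qed



theorem theorem5p10:
  fixes g :: "'n::finite \<Rightarrow> real \<Rightarrow> real"
  assumes "\<And>k. bounded_prob_density (g k)"
  shows "(\<forall>A :: (real^'n) set. convex A \<longrightarrow>
            boundary_measure (prod_density_measure g) A \<le> 2 * (\<Sum>k\<in>UNIV. Linf_norm (g k)))
       \<and> Gamma (prod_density_measure g) \<le> 2 * (\<Sum>k\<in>UNIV. Linf_norm (g k))
       \<and> (\<forall>c::real. c < 2 \<longrightarrow>
            (\<exists>h :: 'n \<Rightarrow> real \<Rightarrow> real. (\<forall>k. bounded_prob_density (h k)) \<and>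
               Gamma (prod_density_measure h) > ereal c * (\<Sum>k\<in>UNIV. Linf_norm (h k))))"
proof (intro conjI)
  show P1: "\<forall>A :: (real^'n) set. convex A \<longrightarrow>
            boundary_measure (prod_density_measure g) A \<le> 2 * (\<Sum>k\<in>UNIV. Linf_norm (g k))"
    using part1[where g=g, OF assms] by blast
  show "Gamma (prod_density_measure g) \<le> 2 * (\<Sum>k\<in>UNIV. Linf_norm (g k))"
    unfolding Gamma_def by (rule SUP_least) (use P1 in \<open>auto simp: convex_body_def\<close>)
  show "\<forall>c::real. c < 2 \<longrightarrow>
            (\<exists>h :: 'n \<Rightarrow> real \<Rightarrow> real. (\<forall>k. bounded_prob_density (h k)) \<and>
               Gamma (prod_density_measure h) > ereal c * (\<Sum>k\<in>UNIV. Linf_norm (h k)))"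
  proof (intro allI impI)
    fix c :: real assume c: "c < 2"
    define l where "l = real_of_ereal (Linf_norm unif)"
    have el: "ereal l = Linf_norm unif" unfolding l_def by (rule Linf_props(3)[OF unif_bpd])
    have l0: "0 \<le> l" unfolding l_def using Linf_props(1)[OF unif_bpd] by (simp add: real_of_ereal_pos)
    have l1: "l \<le> 1" using unif_Linf el by (metis ereal_less_eq(3) one_ereal_def)
    have n1: "CARD('n) \<ge> 1" by (simp add: Suc_leI)
    define d where "d = min (1/4) ((2 - c) / (8 * real CARD('n)))"
    note ac = arith_choice[OF c n1 l0 l1, folded d_def]
    define A :: "(real^'n) set" where "A = cbox (\<chi> i. d) (\<chi> i. 1 - d)"
    have cb: "convex_body A"
      unfolding convex_body_def A_def
    proof (intro conjI)
      have "(\<chi> i. 1/2) \<in> box (\<chi> i. d) (\<chi> i::'n. 1 - d)" using ac(2) by (simp add: mem_box_cart)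
      then show "interior (cbox (\<chi> i. d) (\<chi> i::'n. 1 - d)) \<noteq> {}" by auto
    qed (auto simp: convex_box)
    have "ereal (2 * real CARD('n) * (1 - 2*d) ^ (CARD('n) - 1)) \<le> boundary_measure (prod_density_measure (\<lambda>k::'n. unif)) A"
      unfolding A_def by (rule cube_lower[OF ac(1,2)])
    also have "\<dots> \<le> Gamma (prod_density_measure (\<lambda>k::'n. unif))"
      unfolding Gamma_def by (rule SUP_upper) (use cb in simp)
    finally have G: "ereal (2 * real CARD('n) * (1 - 2*d) ^ (CARD('n) - 1)) \<le> Gamma (prod_density_measure (\<lambda>k::'n. unif))" .
    have "ereal c * (\<Sum>k\<in>(UNIV::'n set). Linf_norm unif) = ereal (c * (real CARD('n) * l))"
      by (simp add: el[symmetric])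
    also have "\<dots> < ereal (2 * real CARD('n) * (1 - 2*d) ^ (CARD('n) - 1))" using ac(3) by simp
    finally have "ereal c * (\<Sum>k\<in>(UNIV::'n set). Linf_norm unif) < Gamma (prod_density_measure (\<lambda>k::'n. unif))"
      using G by (rule order.strict_trans2)
    then show "\<exists>h :: 'n \<Rightarrow> real \<Rightarrow> real. (\<forall>k. bounded_prob_density (h k)) \<and>
               Gamma (prod_density_measure h) > ereal c * (\<Sum>k\<in>UNIV. Linf_norm (h k))"
      by (intro exI[of _ "\<lambda>k. unif"]) (simp add: unif_bpd)
  qed
qed

end
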